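(* Assume Assumption 1, Assumption 2 and the null hypothesis $H_0:\ T_i(1)=T_i(0)$ for all $i$, and condition on $\boldsymbol{T}(1),\boldsymbol{T}(0)$. Then $$\mathbb{E}\{U\mid\boldsymbol{T}(1),\boldsymbol{T}(0)\}\ \ge\ p_1p_0\Big(\frac{n}{\tilde d+1}\cdot\frac1n\sum_{i=1}^n\tilde G(T_i(0))-1\Big)=p_1p_0\Big(\frac{n\tilde g}{\tilde d+1}-1\Big).$$
   Context: There are $n$ units. Unit $i$ has potential event times $T_i(1),T_i(0)\ge 0$, potential censoring times $C_i(1),C_i(0)\in[0,\infty]$, and treatment indicator $Z_i\in\{0,1\}$; bold letters denote $n$-vectors. Assumption 1: conditional on $\boldsymbol{T}(1),\boldsymbol{T}(0),\boldsymbol{C}(1),\boldsymbol{C}(0)$, the $Z_i$ are i.i.d. Bernoulli$(p_1)$, $p_1=1-p_0\in(0,1)$. Assumption 2: $(\boldsymbol{C}(1),\boldsymbol{C}(0))$ is independent of $(\boldsymbol{T}(1),\boldsymbol{T}(0))$ and the pairs $(C_i(1),C_i(0))$ are i.i.d. across $i$. $G_z(c)=\Pr(C_i(z)\ge c)$, $\tilde G(t)=G_1(t)G_0(t)$. Realized: $W_i=\min\{T_i,C_i\}$, $\Delta_i=\mathbb{1}(T_i\le C_i)$ with $T_i=Z_iT_i(1)+(1-Z_i)T_i(0)$, $C_i=Z_iC_i(1)+(1-Z_i)C_i(0)$. Let $t_1<\dots<t_K$ be the distinct values of $\{T_i(0)\}$, $d_k=\#\{i:T_i(0)=t_k\}$,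 $\tilde d=\max_kd_k$, $\tilde g=n^{-1}\sum_i\tilde G(T_i(0))$. For $1\le k\le K$: $N_{1k},N_{0k}$ the numbers of treated / control units with $W_i\ge t_k$, $N_k=N_{1k}+N_{0k}$, $D_k=\sum_i\Delta_i\mathbb{1}(W_i=t_k)$, $V_k=D_k(N_k-D_k)N_{1k}N_{0k}/\{N_k^2(N_k-1)\}$ (convention $0/0:=0$), $U=\sum_{k=1}^KV_k$. *)

theory Defs
  imports "HOL-Probability.Probability"
begin

text \<open>A sample point omega assigns to each unit i the triple
  (Z_i, C_i(1), C_i(0)); censoring times live in [0,\<infinity>] (type ennreal).
  The potential event times T(1), T(0) are fixed (we condition on them).\<close>

type_synonym sample = "nat \<Rightarrow> bool \<times> ennreal \<times> ennreal"

definition realT :: "(nat \<Rightarrow> real) \<Rightarrow> (nat \<Rightarrow> real) \<Rightarrow> sample \<Rightarrow> nat \<Rightarrow> real" where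
  "realT T1 T0 \<omega> i = (if fst (\<omega> i) then T1 i else T0 i)"

definition realC :: "sample \<Rightarrow> nat \<Rightarrow> ennreal" where
  "realC \<omega> i = (if fst (\<omega> i) then fst (snd (\<omega> i)) else snd (snd (\<omega> i)))"

definition obsW :: "(nat \<Rightarrow> real) \<Rightarrow> (nat \<Rightarrow> real) \<Rightarrow> sample \<Rightarrow> nat \<Rightarrow> ennreal" where
  "obsW T1 T0 \<omega> i = min (ennreal (realT T1 T0 \<omega> i)) (realC \<omega> i)"

definition obsDelta :: "(nat \<Rightarrow> real) \<Rightarrow> (nat \<Rightarrow> real) \<Rightarrow> sample \<Rightarrow> nat \<Rightarrow> bool" where
  "obsDelta T1 T0 \<omega> i \<longleftrightarrow> ennreal (realT T1 T0 \<omega> i) \<le> realC \<omega> i"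

definition atRisk1 :: "nat \<Rightarrow> (nat \<Rightarrow> real) \<Rightarrow> (nat \<Rightarrow> real) \<Rightarrow> sample \<Rightarrow> real \<Rightarrow> nat" where
  "atRisk1 n T1 T0 \<omega> t = card {i \<in> {..<n}. fst (\<omega> i) \<and> ennreal t \<le> obsW T1 T0 \<omega> i}"

definition atRisk0 :: "nat \<Rightarrow> (nat \<Rightarrow> real) \<Rightarrow> (nat \<Rightarrow> real) \<Rightarrow> sample \<Rightarrow> real \<Rightarrow> nat" where
  "atRisk0 n T1 T0 \<omega> t = card {i \<in> {..<n}. \<not> fst (\<omega> i) \<and> ennreal t \<le> obsW T1 T0 \<omega> i}"

definition events :: "nat \<Rightarrow> (nat \<Rightarrow> real) \<Rightarrow> (nat \<Rightarrow> real) \<Rightarrow> sample \<Rightarrow> real \<Rightarrow> nat" where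
  "events n T1 T0 \<omega> t = card {i \<in> {..<n}. obsDelta T1 T0 \<omega> i \<and> obsW T1 T0 \<omega> i = ennreal t}"

text \<open>V_k; real division by zero is 0 in HOL, matching the convention 0/0 := 0.\<close>
definition Vterm :: "nat \<Rightarrow> (nat \<Rightarrow> real) \<Rightarrow> (nat \<Rightarrow> real) \<Rightarrow> sample \<Rightarrow> real \<Rightarrow> real" where
  "Vterm n T1 T0 \<omega> t =
    (let N1 = real (atRisk1 n T1 T0 \<omega> t); N0 = real (atRisk0 n T1 T0 \<omega> t);
         N = N1 + N0; D = real (events n T1 T0 \<omega> t)
     in D * (N - D) * N1 * N0 / (N^2 * (N - 1)))"

definition logrank_U :: "nat \<Rightarrow> (nat \<Rightarrow> real) \<Rightarrow> (nat \<Rightarrow> real) \<Rightarrow> sample \<Rightarrow> real" where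
  "logrank_U n T1 T0 \<omega> = (\<Sum>t \<in> T0 ` {..<n}. Vterm n T1 T0 \<omega> t)"

definition Gsurv1 :: "(ennreal \<times> ennreal) measure \<Rightarrow> ennreal \<Rightarrow> real" where
  "Gsurv1 \<mu> c = measure \<mu> {x \<in> space \<mu>. c \<le> fst x}"

definition Gsurv0 :: "(ennreal \<times> ennreal) measure \<Rightarrow> ennreal \<Rightarrow> real" where
  "Gsurv0 \<mu> c = measure \<mu> {x \<in> space \<mu>. c \<le> snd x}"

definition Gtilde :: "(ennreal \<times> ennreal) measure \<Rightarrow> real \<Rightarrow> real" where
  "Gtilde \<mu> t = Gsurv1 \<mu> (ennreal t) * Gsurv0 \<mu> (ennreal t)"

definition tie_max :: "nat \<Rightarrow> (nat \<Rightarrow> real) \<Rightarrow> nat" where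
  "tie_max n T0 = Max ((\<lambda>t. card {i \<in> {..<n}. T0 i = t}) ` (T0 ` {..<n}))"

definition gtilde :: "nat \<Rightarrow> (ennreal \<times> ennreal) measure \<Rightarrow> (nat \<Rightarrow> real) \<Rightarrow> real" where
  "gtilde n \<mu> T0 = (\<Sum>i<n. Gtilde \<mu> (T0 i)) / real n"

definition design :: "nat \<Rightarrow> real \<Rightarrow> (ennreal \<times> ennreal) measure \<Rightarrow> sample measure" where
  "design n p1 \<mu> = PiM {..<n} (\<lambda>_. measure_pmf (bernoulli_pmf p1) \<Otimes>\<^sub>M \<mu>)"

end

theory Submission
  imports Defs
begin

definition Epi :: "nat set \<Rightarrow> (nat \<Rightarrow> bool option pmf) \<Rightarrow> ((nat \<Rightarrow> bool option) \<Rightarrow> real) \<Rightarrow> real" where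
  "Epi I p G = measure_pmf.expectation (Pi_pmf I None p) G"

lemma finite_bo[simp]: "finite (S :: bool option set)"
proof (rule finite_subset[of _ "{None, Some True, Some False}"])
  show "S \<subseteq> {None, Some True, Some False}"
  proof
    fix x assume "x \<in> S" show "x \<in> {None, Some True, Some False}" by (cases x) auto
  qed
qed simp

lemma finite_set_Pi_pmf: "finite I \<Longrightarrow> finite (set_pmf (Pi_pmf I None (p :: nat \<Rightarrow> bool option pmf)))"
  by (rule finite_subset[OF set_Pi_pmf_subset']) (auto intro!: finite_PiE_dflt finite_bo)

lemma Epi_integrable: "finite I \<Longrightarrow> integrable (measure_pmf (Pi_pmf I None (p :: nat \<Rightarrow> bool option pmf))) (G :: _ \<Rightarrow> real)"
  by (rule integrable_measure_pmf_finite[OF finite_set_Pi_pmf])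

lemma Epi_mono:
  assumes "finite I" "\<And>x. x \<in> set_pmf (Pi_pmf I None p) \<Longrightarrow> f x \<le> g x"
  shows "Epi I p f \<le> Epi I p g"
  unfolding Epi_def
  by (rule integral_mono_AE) (auto intro!: Epi_integrable AE_pmfI assms)

lemma Epi_cong:
  assumes "\<And>x. x \<in> set_pmf (Pi_pmf I None p) \<Longrightarrow> f x = g x"
  shows "Epi I p f = Epi I p g"
  unfolding Epi_def
  by (rule integral_cong_AE) (auto intro!: AE_pmfI assms)

lemma Epi_sum:
  assumes "finite I"
  shows "Epi I p (\<lambda>x. \<Sum>j\<in>J. f j x) = (\<Sum>j\<in>J. Epi I p (f j))"
  unfolding Epi_def by (rule Bochner_Integration.integral_sum) (auto intro!: Epi_integrable assms)

lemma Epi_cmult: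
  shows "Epi I p (\<lambda>x. c * f x) = c * Epi I p f"
  unfolding Epi_def by simp

lemma Epi_const: "Epi I p (\<lambda>x. c) = c"
  unfolding Epi_def by simp

lemma pair_indep:
  fixes f g :: "_ \<Rightarrow> real"
  assumes "finite (set_pmf A)" "finite (set_pmf B)"
  shows "measure_pmf.expectation (pair_pmf A B) (\<lambda>z. f (fst z) * g (snd z))
       = measure_pmf.expectation A f * measure_pmf.expectation B g"
proof -
  have "measure_pmf.expectation (pair_pmf A B) (\<lambda>z. f (fst z) * g (snd z))
      = (\<Sum>z\<in>set_pmf A \<times> set_pmf B. f (fst z) * g (snd z) * pmf (pair_pmf A B) z)"
    by (rule integral_measure_pmf_real) (use assms in auto)
  also have "\<dots> = (\<Sum>a\<in>set_pmf A. \<Sum>b\<in>set_pmf B. (f a * pmf A a) * (g b * pmf B b))"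
    by (subst sum.cartesian_product) (auto intro!: sum.cong simp: pmf_pair algebra_simps)
  also have "\<dots> = (\<Sum>a\<in>set_pmf A. f a * pmf A a) * (\<Sum>b\<in>set_pmf B. g b * pmf B b)"
    by (simp add: sum_product)
  also have "(\<Sum>a\<in>set_pmf A. f a * pmf A a) = measure_pmf.expectation A f"
    by (rule integral_measure_pmf_real[symmetric]) (use assms in auto)
  also have "(\<Sum>b\<in>set_pmf B. g b * pmf B b) = measure_pmf.expectation B g"
    by (rule integral_measure_pmf_real[symmetric]) (use assms in auto)
  finally show ?thesis .
qed

lemma Epi_transfer:
  assumes "finite I" "j \<in> I"
  shows "Epi I p (\<lambda>x. (if x j = a then 1 else 0) * G x) = pmf (p j) a * Epi I p (\<lambda>x. G (x(j := a)))"
proof -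
  define A where "A = I - {j}"
  have I: "I = insert j A" "j \<notin> A" "finite A" using assms by (auto simp: A_def)
  have PI: "Pi_pmf I None p = map_pmf (\<lambda>(y,f). f(j:=y)) (pair_pmf (p j) (Pi_pmf A None p))"
    by (subst I(1)) (rule Pi_pmf_insert; fact)
  have fA: "finite (set_pmf (Pi_pmf A None p))" using I by (simp add: finite_set_Pi_pmf)
  have fj: "finite (set_pmf (p j))" by (rule finite_subset[of _ UNIV]) auto
  have "Epi I p (\<lambda>x. (if x j = a then 1 else 0) * G x)
     = measure_pmf.expectation (pair_pmf (p j) (Pi_pmf A None p))
          (\<lambda>z. (if fst z = a then 1 else 0) * (\<lambda>f. G (f(j:=a))) (snd z))"
    unfolding Epi_def PI integral_map_pmf by (rule Bochner_Integration.integral_cong[OF refl]) (auto simp: case_prod_beta)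
  also have "\<dots> = measure_pmf.expectation (p j) (\<lambda>y. if y = a then 1 else 0)
       * measure_pmf.expectation (Pi_pmf A None p) (\<lambda>f. G (f(j:=a)))"
    by (rule pair_indep[OF fj fA])
  also have "measure_pmf.expectation (p j) (\<lambda>y. if y = a then 1 else 0) = pmf (p j) a"
  proof -
    have "(\<lambda>y. if y = a then 1 else 0) = (indicator {a} :: _ \<Rightarrow> real)"
      by (auto simp: indicator_def)
    then show ?thesis by (simp add: measure_pmf_single)
  qed
  also have "measure_pmf.expectation (Pi_pmf A None p) (\<lambda>f. G (f(j:=a)))
      = measure_pmf.expectation (pair_pmf (p j) (Pi_pmf A None p)) (\<lambda>z. (\<lambda>f. G (f(j:=a))) (snd z))"
    by (rule expectation_pair_pmf_snd[symmetric])
  also have "\<dots> = Epi I p (\<lambda>x. G (x(j := a)))"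
    unfolding Epi_def PI integral_map_pmf by (rule Bochner_Integration.integral_cong[OF refl]) (auto simp: case_prod_beta)
  finally show ?thesis .
qed


lemma Epi_add:
  assumes "finite I"
  shows "Epi I p (\<lambda>x. f x + g x) = Epi I p f + Epi I p g"
  unfolding Epi_def by (rule Bochner_Integration.integral_add) (auto intro!: Epi_integrable assms)

lemma pairE:
  assumes "finite I" "j \<in> I" "l \<in> I" "j \<noteq> l"
  shows "Epi I p (\<lambda>x. (if x j = u then 1 else 0) * ((if x l = v then 1 else 0) * G x))
       = pmf (p j) u * pmf (p l) v * Epi I p (\<lambda>x. G (x(j := u, l := v)))"
proof -
  have "Epi I p (\<lambda>x. (if x j = u then 1 else 0) * ((if x l = v then 1 else 0) * G x))
      = pmf (p j) u * Epi I p (\<lambda>x. (if x l = v then 1 else 0) * G (x(j := u)))"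
    using Epi_transfer[OF assms(1,2), of p u "\<lambda>x. (if x l = v then 1 else 0) * G x"] assms(4)
    by simp
  also have "Epi I p (\<lambda>x. (if x l = v then 1 else 0) * G (x(j := u)))
      = pmf (p l) v * Epi I p (\<lambda>x. G ((x(l := v))(j := u)))"
    using Epi_transfer[OF assms(1,3), of p v "\<lambda>x. G (x(j := u))"] by simp
  also have "(\<lambda>x. G ((x(l := v))(j := u))) = (\<lambda>x. G (x(j := u, l := v)))"
    using assms(4) by (simp add: fun_upd_twist)
  finally show ?thesis by (simp add: mult.assoc)
qed

definition Xt :: "nat \<Rightarrow> (nat \<Rightarrow> bool option) \<Rightarrow> real" where
  "Xt j x = (if x j = Some True then 1 else 0)"
definition Yt :: "nat \<Rightarrow> (nat \<Rightarrow> bool option) \<Rightarrow> real" where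
  "Yt j x = (if x j = Some False then 1 else 0)"
definition Rt :: "nat \<Rightarrow> (nat \<Rightarrow> bool option) \<Rightarrow> real" where
  "Rt j x = (if x j \<noteq> None then 1 else 0)"
definition ee :: "(nat \<Rightarrow> bool option) \<Rightarrow> nat \<Rightarrow> bool" where
  "ee x = (\<lambda>i. x i \<noteq> None)"

lemma Rt_eq: "Rt j x = Xt j x + Yt j x"
  unfolding Rt_def Xt_def Yt_def by (cases "x j") auto

lemma ee_upd: "ee (x(j := Some a, l := Some b)) = (ee x)(j := True, l := True)"
  unfolding ee_def by (auto simp: fun_eq_iff)

lemma pairE_gen:
  assumes "finite I" "j \<in> I" "l \<in> I" "j \<noteq> l"
  shows "Epi I p (\<lambda>x. (if x j = Some a then 1 else 0) * ((if x l = Some b then 1 else 0) * H (ee x)))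
       = pmf (p j) (Some a) * pmf (p l) (Some b) * Epi I p (\<lambda>x. H ((ee x)(j := True, l := True)))"
  using pairE[OF assms, where u="Some a" and v="Some b" and p=p and G="\<lambda>x. H (ee x)"] by (simp add: ee_upd)

lemma pairE_R:
  assumes "finite I" "j \<in> I" "l \<in> I" "j \<noteq> l"
  shows "Epi I p (\<lambda>x. Rt j x * (Rt l x * H (ee x)))
       = (pmf (p j) (Some True) + pmf (p j) (Some False)) * (pmf (p l) (Some True) + pmf (p l) (Some False))
          * Epi I p (\<lambda>x. H ((ee x)(j := True, l := True)))"
proof -
  let ?K = "Epi I p (\<lambda>x. H ((ee x)(j := True, l := True)))"
  let ?T = "\<lambda>a b. Epi I p (\<lambda>x. (if x j = Some a then 1 else 0) * ((if x l = Some b then 1 else 0) * H (ee x)))"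
  have "(\<lambda>x. Rt j x * (Rt l x * H (ee x))) = (\<lambda>x.
      ((if x j = Some True then 1 else 0) * ((if x l = Some True then 1 else 0) * H (ee x))
      + (if x j = Some True then 1 else 0) * ((if x l = Some False then 1 else 0) * H (ee x)))
      + ((if x j = Some False then 1 else 0) * ((if x l = Some True then 1 else 0) * H (ee x))
      + (if x j = Some False then 1 else 0) * ((if x l = Some False then 1 else 0) * H (ee x))))"
    unfolding Rt_eq Xt_def Yt_def by (auto simp: fun_eq_iff algebra_simps)
  then have "Epi I p (\<lambda>x. Rt j x * (Rt l x * H (ee x))) = (?T True True + ?T True False) + (?T False True + ?T False False)"
    by (simp add: Epi_add assms(1))
  also have "\<dots> = (pmf (p j) (Some True) + pmf (p j) (Some False)) * (pmf (p l) (Some True) + pmf (p l) (Some False)) * ?K"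
    by (simp only: pairE_gen[OF assms]) (simp add: algebra_simps)
  finally show ?thesis .
qed

lemma pair_transfer:
  assumes "finite I" "j \<in> I" "l \<in> I" "j \<noteq> l"
    and hp: "\<And>i. i \<in> I \<Longrightarrow> (pmf (p i) (Some True) = \<alpha> \<and> pmf (p i) (Some False) = \<beta>)
                   \<or> (pmf (p i) (Some True) = 0 \<and> pmf (p i) (Some False) = 0)"
  shows "(\<alpha> + \<beta>)^2 * Epi I p (\<lambda>x. Xt j x * (Yt l x * H (ee x)))
       = \<alpha> * \<beta> * Epi I p (\<lambda>x. Rt j x * (Rt l x * H (ee x)))"
proof -
  have "Epi I p (\<lambda>x. Xt j x * (Yt l x * H (ee x))) = pmf (p j) (Some True) * pmf (p l) (Some False)
        * Epi I p (\<lambda>x. H ((ee x)(j := True, l := True)))"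
    unfolding Xt_def Yt_def by (rule pairE_gen[OF assms(1-4)])
  then show ?thesis
    unfolding pairE_R[OF assms(1-4)]
    using hp[OF assms(2)] hp[OF assms(3)]
    by (auto simp: power2_eq_square algebra_simps)
qed


lemma card_sum: "finite I \<Longrightarrow> real (card {i\<in>I. P i}) = (\<Sum>i\<in>I. if P i then 1 else 0)"
  by (simp add: sum.inter_filter[symmetric])

lemma ab_sum:
  assumes "finite I"
  shows "real (card {i\<in>I. x i = Some True}) * real (card {i\<in>I. x i = Some False})
       = (\<Sum>j\<in>I. \<Sum>l\<in>I-{j}. Xt j x * Yt l x)"
proof -
  have "real (card {i\<in>I. x i = Some True}) * real (card {i\<in>I. x i = Some False})
      = (\<Sum>j\<in>I. Xt j x) * (\<Sum>l\<in>I. Yt l x)"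
    unfolding Xt_def Yt_def using assms by (simp add: card_sum)
  also have "\<dots> = (\<Sum>j\<in>I. \<Sum>l\<in>I. Xt j x * Yt l x)" by (simp add: sum_product)
  also have "\<dots> = (\<Sum>j\<in>I. \<Sum>l\<in>I-{j}. Xt j x * Yt l x)"
  proof (rule sum.cong[OF refl])
    fix j assume "j \<in> I"
    then have "(\<Sum>l\<in>I. Xt j x * Yt l x) = Xt j x * Yt j x + (\<Sum>l\<in>I-{j}. Xt j x * Yt l x)"
      using assms by (simp add: sum.remove)
    then show "(\<Sum>l\<in>I. Xt j x * Yt l x) = (\<Sum>l\<in>I-{j}. Xt j x * Yt l x)"
      by (simp add: Xt_def Yt_def)
  qed
  finally show ?thesis .
qed

lemma NN_sum:
  assumes "finite I"
  shows "real (card {i\<in>I. e i}) * (real (card {i\<in>I. e i}) - 1)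
       = (\<Sum>j\<in>I. \<Sum>l\<in>I-{j}. (if e j then 1 else 0) * (if e l then 1 else (0::real)))"
proof -
  let ?r = "\<lambda>j. if e j then 1 else (0::real)"
  have "real (card {i\<in>I. e i}) * (real (card {i\<in>I. e i}) - 1)
      = (\<Sum>j\<in>I. ?r j) * (\<Sum>l\<in>I. ?r l) - (\<Sum>j\<in>I. ?r j)"
    using assms by (simp add: card_sum algebra_simps)
  also have "\<dots> = (\<Sum>j\<in>I. (\<Sum>l\<in>I. ?r j * ?r l) - ?r j)"
    by (simp add: sum_product sum_subtractf)
  also have "\<dots> = (\<Sum>j\<in>I. \<Sum>l\<in>I-{j}. ?r j * ?r l)"
  proof (rule sum.cong[OF refl])
    fix j assume "j \<in> I"
    then have "(\<Sum>l\<in>I. ?r j * ?r l) = ?r j * ?r j + (\<Sum>l\<in>I-{j}. ?r j * ?r l)"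
      using assms by (simp add: sum.remove)
    then show "(\<Sum>l\<in>I. ?r j * ?r l) - ?r j = (\<Sum>l\<in>I-{j}. ?r j * ?r l)"
      by simp
  qed
  finally show ?thesis .
qed

definition FF :: "nat set \<Rightarrow> nat set \<Rightarrow> (nat \<Rightarrow> bool option) \<Rightarrow> real" where
  "FF I E x = (let N1 = real (card {i\<in>I. x i = Some True}); N0 = real (card {i\<in>I. x i = Some False});
                   N = N1 + N0; D = real (card {i\<in>E. x i \<noteq> None})
               in D * (N - D) * N1 * N0 / (N^2 * (N - 1)))"

definition HH :: "nat set \<Rightarrow> nat set \<Rightarrow> nat set \<Rightarrow> nat \<Rightarrow> (nat \<Rightarrow> bool) \<Rightarrow> real" where
  "HH I E F d e = real (card {i\<in>E. e i}) * (if 1 \<le> card {i\<in>F. e i} then 1 else 0)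
      / ((real d + 1) * real (card {i\<in>I. e i}) * (real (card {i\<in>I. e i}) - 1))"

lemma arith_main:
  fixes a b D Q d :: nat
  assumes "a + b = D + Q" "D \<le> d"
  shows "real a * real b * (real D * (if 1 \<le> Q then 1 else 0) / ((real d + 1) * (real a + real b) * (real a + real b - 1)))
     \<le> real D * ((real a + real b) - real D) * real a * real b / ((real a + real b)^2 * (real a + real b - 1))"
proof -
  have N1: "real a + real b - real D = real Q" using assms(1)
    by (metis add_diff_cancel_left' of_nat_add)
  have rhs_nn: "0 \<le> real D * ((real a + real b) - real D) * real a * real b / ((real a + real b)^2 * (real a + real b - 1))"
  proof (cases "a + b = 0")
    case True then show ?thesis by simp
  next
    case False then have "real a + real b - 1 \<ge> 0" by linarith
    then show ?thesis unfolding N1 by (intro divide_nonneg_nonneg mult_nonneg_nonneg) auto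
  qed
  show ?thesis
  proof (cases "1 \<le> Q \<and> a + b \<ge> 2")
    case False
    then have "Q = 0 \<or> a * b = 0" by (cases a; cases b; auto)
    then show ?thesis using rhs_nn by auto
  next
    case True
    define N where "N = real a + real b"
    have N2: "N \<ge> 2" using True unfolding N_def by linarith
    define c where "c = real a * real b * real D / (N * (N - 1))"
    have c0: "c \<ge> 0" unfolding c_def using N2 by (intro divide_nonneg_nonneg mult_nonneg_nonneg) auto
    have L: "real a * real b * (real D * (if 1 \<le> Q then 1 else 0) / ((real d + 1) * N * (N - 1))) = c * (1 / (real d + 1))"
      using True N2 unfolding c_def by (simp add: field_simps)
    have R: "real D * (N - real D) * real a * real b / (N^2 * (N - 1)) = c * (real Q / N)"
      using N2 unfolding c_def N1[folded N_def] by (simp add: field_simps power2_eq_square)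
    have "1 / (real d + 1) \<le> real Q / N"
    proof -
      have "N \<le> (real d + 1) * real Q"
      proof -
        have "real D \<le> real d * real Q" using assms(2) True
          by (metis mult.right_neutral mult_left_mono of_nat_0_le_iff of_nat_1 of_nat_le_iff order_trans)
        then show ?thesis unfolding N_def using assms(1) by (simp add: algebra_simps)
      qed
      then show ?thesis using N2 by (simp add: field_simps)
    qed
    then have "c * (1 / (real d + 1)) \<le> c * (real Q / N)" using c0 by (rule mult_left_mono)
    then show ?thesis using L R unfolding N_def by simp
  qed
qed


lemma core:
  assumes finI: "finite I" and EI: "E \<subseteq> I" and FI: "F \<subseteq> I" and EF: "E \<inter> F = {}" and q0: "q0 \<in> F"
    and p_in: "\<And>i. i \<in> E \<union> F \<Longrightarrow> p i = q"
    and p_out: "\<And>i. i \<in> I \<Longrightarrow> i \<notin> E \<union> F \<Longrightarrow> p i = return_pmf None"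
    and d: "card E \<le> d"
  shows "real (card E) * pmf q (Some True) * pmf q (Some False) / (real d + 1) \<le> Epi I p (FF I E)"
proof -
  define \<alpha> where "\<alpha> = pmf q (Some True)"
  define \<beta> where "\<beta> = pmf q (Some False)"
  define s where "s = \<alpha> + \<beta>"
  have finE: "finite E" and finF: "finite F" using finI EI FI finite_subset by auto
  have supp: "i \<in> E \<union> F" if "x \<in> set_pmf (Pi_pmf I None p)" "x i \<noteq> None" for x i
  proof (rule ccontr)
    assume i: "i \<notin> E \<union> F"
    have "x \<in> PiE_dflt I None (set_pmf \<circ> p)" using set_Pi_pmf_subset'[OF finI, of None p] that(1) by blast
    then show False using that(2) p_out[of i] i by (cases "i \<in> I") (auto simp: PiE_dflt_def)
  qed
  have hp: "(pmf (p i) (Some True) = \<alpha> \<and> pmf (p i) (Some False) = \<beta>)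
          \<or> (pmf (p i) (Some True) = 0 \<and> pmf (p i) (Some False) = 0)" if "i \<in> I" for i
    using p_in[of i] p_out[of i] that unfolding \<alpha>_def \<beta>_def by (cases "i \<in> E \<union> F") auto
  define H where "H = HH I E F d"
  let ?cT = "\<lambda>x. real (card {i\<in>I. x i = Some True})"
  let ?cF = "\<lambda>x. real (card {i\<in>I. x i = Some False})"
  let ?N = "\<lambda>x. real (card {i\<in>I. ee x i})"
  have ab: "?cT x * ?cF x * H (ee x) = (\<Sum>j\<in>I. \<Sum>l\<in>I-{j}. Xt j x * (Yt l x * H (ee x)))" for x
    by (simp add: ab_sum[OF finI] sum_distrib_right mult.assoc)
  have nn: "?N x * (?N x - 1) * H (ee x) = (\<Sum>j\<in>I. \<Sum>l\<in>I-{j}. Rt j x * (Rt l x * H (ee x)))" for x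
    using NN_sum[OF finI, of "ee x"] by (simp add: sum_distrib_right mult.assoc Rt_def ee_def)
  have T1: "s^2 * Epi I p (\<lambda>x. ?cT x * ?cF x * H (ee x)) = \<alpha> * \<beta> * Epi I p (\<lambda>x. ?N x * (?N x - 1) * H (ee x))"
  proof -
    have "s^2 * Epi I p (\<lambda>x. ?cT x * ?cF x * H (ee x))
        = (\<Sum>j\<in>I. \<Sum>l\<in>I-{j}. s^2 * Epi I p (\<lambda>x. Xt j x * (Yt l x * H (ee x))))"
      by (simp only: ab Epi_sum[OF finI] sum_distrib_left)
    also have "\<dots> = (\<Sum>j\<in>I. \<Sum>l\<in>I-{j}. \<alpha> * \<beta> * Epi I p (\<lambda>x. Rt j x * (Rt l x * H (ee x))))"
      unfolding s_def by (intro sum.cong refl pair_transfer[OF finI] hp) auto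
    also have "\<dots> = \<alpha> * \<beta> * Epi I p (\<lambda>x. ?N x * (?N x - 1) * H (ee x))"
      by (simp only: nn Epi_sum[OF finI] sum_distrib_left)
    finally show ?thesis .
  qed
  have T2: "?cT x * ?cF x * H (ee x) \<le> FF I E x" if x: "x \<in> set_pmf (Pi_pmf I None p)" for x
  proof -
    define a where "a = card {i\<in>I. x i = Some True}"
    define b where "b = card {i\<in>I. x i = Some False}"
    define D where "D = card {i\<in>E. x i \<noteq> None}"
    define Q where "Q = card {i\<in>F. x i \<noteq> None}"
    have "{i\<in>I. x i \<noteq> None} = {i\<in>I. x i = Some True} \<union> {i\<in>I. x i = Some False}" by auto
    then have Nab: "card {i\<in>I. x i \<noteq> None} = a + b" unfolding a_def b_def
      using finI by (subst card_Un_disjoint[symmetric]) auto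
    have "{i\<in>I. x i \<noteq> None} = {i\<in>E. x i \<noteq> None} \<union> {i\<in>F. x i \<noteq> None}"
      using supp[OF x] EI FI by auto
    then have NDQ: "card {i\<in>I. x i \<noteq> None} = D + Q" unfolding D_def Q_def
      using finE finF EF by (subst card_Un_disjoint[symmetric]) auto
    have "D \<le> card E" unfolding D_def using finE by (intro card_mono) auto
    then have Dd: "D \<le> d" using d by linarith
    have "?cT x * ?cF x * H (ee x) = real a * real b * (real D * (if 1 \<le> Q then 1 else 0)
          / ((real d + 1) * (real a + real b) * (real a + real b - 1)))"
      unfolding H_def HH_def a_def[symmetric] b_def[symmetric] ee_def D_def[symmetric] Q_def[symmetric]
      using Nab by simp
    also have "\<dots> \<le> real D * ((real a + real b) - real D) * real a * real b / ((real a + real b)^2 * (real a + real b - 1))"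
      by (rule arith_main) (use Nab NDQ Dd in auto)
    also have "\<dots> = FF I E x" unfolding FF_def a_def b_def D_def Let_def by simp
    finally show ?thesis .
  qed
  have T3: "(\<Sum>i\<in>E. Rt i x * (Rt q0 x * 1)) / (real d + 1) \<le> ?N x * (?N x - 1) * H (ee x)"
    if x: "x \<in> set_pmf (Pi_pmf I None p)" for x
  proof -
    define D where "D = card {i\<in>E. x i \<noteq> None}"
    define Q where "Q = card {i\<in>F. x i \<noteq> None}"
    have "{i\<in>I. x i \<noteq> None} = {i\<in>E. x i \<noteq> None} \<union> {i\<in>F. x i \<noteq> None}"
      using supp[OF x] EI FI by auto
    then have NDQ: "card {i\<in>I. ee x i} = D + Q" unfolding D_def Q_def ee_def
      using finE finF EF by (subst card_Un_disjoint[symmetric]) auto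
    have sumD: "(\<Sum>i\<in>E. Rt i x) = real D" unfolding D_def Rt_def using finE by (simp add: card_sum)
    have Hx: "H (ee x) = real D * (if 1 \<le> Q then 1 else 0) / ((real d + 1) * real (D + Q) * (real (D + Q) - 1))"
      unfolding H_def HH_def NDQ by (simp add: D_def Q_def ee_def)
    show ?thesis
    proof (cases "x q0 \<noteq> None")
      case True
      then have ne: "{i\<in>F. x i \<noteq> None} \<noteq> {}" using q0 by auto
      have Q1: "1 \<le> Q" unfolding Q_def using ne finF by (simp add: Suc_le_eq card_gt_0_iff)
      have "(\<Sum>i\<in>E. Rt i x * (Rt q0 x * 1)) = real D" using True sumD by (simp add: Rt_def)
      moreover have "?N x * (?N x - 1) * H (ee x) = real D / (real d + 1)"
      proof (cases "D = 0")
        case True then show ?thesis using Hx by simp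
      next
        case False
        define M where "M = real (D + Q) * (real (D + Q) - 1)"
        have M0: "M \<noteq> 0" using Q1 False unfolding M_def by auto
        have "?N x * (?N x - 1) * H (ee x) = M * (real D / ((real d + 1) * M))"
          unfolding Hx NDQ M_def using Q1 by (simp add: mult.assoc)
        also have "\<dots> = (real D * M) / ((real d + 1) * M)" by simp
        also have "\<dots> = real D / (real d + 1)" using M0 by (rule nonzero_mult_divide_mult_cancel_right)
        finally show ?thesis .
      qed
      ultimately show ?thesis by simp
    next
      case False
      have "?N x * (?N x - 1) * H (ee x) \<ge> 0"
        unfolding Hx NDQ by (cases "D + Q") (auto intro!: mult_nonneg_nonneg divide_nonneg_nonneg)
      then show ?thesis using False by (simp add: Rt_def)
    qed
  qed
  have T4: "Epi I p (\<lambda>x. \<Sum>i\<in>E. Rt i x * (Rt q0 x * 1)) = real (card E) * s^2"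
  proof -
    have "Epi I p (\<lambda>x. \<Sum>i\<in>E. Rt i x * (Rt q0 x * 1)) = (\<Sum>i\<in>E. Epi I p (\<lambda>x. Rt i x * (Rt q0 x * (\<lambda>_. 1) (ee x))))"
      by (simp add: Epi_sum[OF finI])
    also have "\<dots> = (\<Sum>i\<in>E. s^2)"
    proof (rule sum.cong[OF refl])
      fix i assume i: "i \<in> E"
      have "i \<noteq> q0" using i q0 EF by auto
      then show "Epi I p (\<lambda>x. Rt i x * (Rt q0 x * (\<lambda>_. 1) (ee x))) = s^2"
        using pairE_R[OF finI _ _ \<open>i \<noteq> q0\<close>, of p "\<lambda>_. 1"] i q0 EI FI p_in[of i] p_in[of q0]
        by (auto simp: Epi_const s_def \<alpha>_def \<beta>_def power2_eq_square)
    qed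
    finally show ?thesis by simp
  qed
  have A1: "s^2 * Epi I p (FF I E) \<ge> s^2 * Epi I p (\<lambda>x. ?cT x * ?cF x * H (ee x))"
    by (intro mult_left_mono Epi_mono finI T2) auto
  have A2: "Epi I p (\<lambda>x. ?N x * (?N x - 1) * H (ee x)) \<ge> real (card E) * s^2 / (real d + 1)"
  proof -
    have "real (card E) * s^2 / (real d + 1) = Epi I p (\<lambda>x. (\<Sum>i\<in>E. Rt i x * (Rt q0 x * 1)) / (real d + 1))"
      using T4 Epi_cmult[of I p "1 / (real d + 1)"] by simp
    also have "\<dots> \<le> Epi I p (\<lambda>x. ?N x * (?N x - 1) * H (ee x))"
      by (intro Epi_mono finI T3)
    finally show ?thesis .
  qed
  have ab0: "\<alpha> \<ge> 0" "\<beta> \<ge> 0" unfolding \<alpha>_def \<beta>_def by auto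
  show ?thesis
  proof (cases "s = 0")
    case True
    then have "\<alpha> = 0" using ab0 s_def by auto
    moreover have "0 \<le> Epi I p (FF I E)"
    proof -
      have "0 \<le> Epi I p (\<lambda>x. ?cT x * ?cF x * H (ee x))"
      proof -
        have "Epi I p (\<lambda>x. 0) \<le> Epi I p (\<lambda>x. ?cT x * ?cF x * H (ee x))"
        proof (intro Epi_mono finI)
          fix x
          show "0 \<le> ?cT x * ?cF x * H (ee x)" unfolding H_def HH_def
            by (cases "card {i \<in> I. ee x i}") (auto intro!: mult_nonneg_nonneg divide_nonneg_nonneg)
        qed
        then show ?thesis by (simp add: Epi_const)
      qed
      also have "\<dots> \<le> Epi I p (FF I E)" by (intro Epi_mono finI T2)
      finally show ?thesis .
    qed
    ultimately show ?thesis by (simp add: \<alpha>_def)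
  next
    case False
    then have s2: "s^2 > 0" by simp
    have "s^2 * (real (card E) * \<alpha> * \<beta> / (real d + 1)) = \<alpha> * \<beta> * (real (card E) * s^2 / (real d + 1))"
      by (simp add: field_simps)
    also have "\<dots> \<le> \<alpha> * \<beta> * Epi I p (\<lambda>x. ?N x * (?N x - 1) * H (ee x))"
      using A2 ab0 by (intro mult_left_mono) auto
    also have "\<dots> = s^2 * Epi I p (\<lambda>x. ?cT x * ?cF x * H (ee x))" using T1 by simp
    also have "\<dots> \<le> s^2 * Epi I p (FF I E)" using A1 by simp
    finally have "s^2 * (real (card E) * \<alpha> * \<beta> / (real d + 1)) \<le> s^2 * Epi I p (FF I E)" .
    then show ?thesis unfolding \<alpha>_def \<beta>_def by (rule mult_left_le_imp_le) (use s2 in auto)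
  qed
qed

lemma meas_mu:
  assumes "sets \<mu> = sets (borel :: (ennreal \<times> ennreal) measure)"
  shows "fst \<in> borel_measurable \<mu>" "snd \<in> borel_measurable \<mu>"
proof -
  have "fst \<in> measurable (borel \<Otimes>\<^sub>M borel :: (ennreal \<times> ennreal) measure) borel" by measurable
  then have "fst \<in> measurable (borel :: (ennreal \<times> ennreal) measure) borel" by (simp add: borel_prod)
  then show "fst \<in> borel_measurable \<mu>" using measurable_cong_sets[OF assms refl] by blast
  have "snd \<in> measurable (borel \<Otimes>\<^sub>M borel :: (ennreal \<times> ennreal) measure) borel" by measurable
  then have "snd \<in> measurable (borel :: (ennreal \<times> ennreal) measure) borel" by (simp add: borel_prod)
  then show "snd \<in> borel_measurable \<mu>" using measurable_cong_sets[OF assms refl] by blast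
qed

definition stt :: "real \<Rightarrow> real \<Rightarrow> bool \<times> ennreal \<times> ennreal \<Rightarrow> bool option" where
  "stt t c y = (if ennreal t \<le> min (ennreal c) (if fst y then fst (snd y) else snd (snd y)) then Some (fst y) else None)"

lemma stt_meas:
  assumes "sets \<mu> = sets (borel :: (ennreal \<times> ennreal) measure)"
  shows "stt t c \<in> measurable (measure_pmf (bernoulli_pmf p1) \<Otimes>\<^sub>M \<mu>) (count_space UNIV)"
proof -
  note m = meas_mu[OF assms]
  have [measurable]: "(\<lambda>y. fst (snd y)) \<in> borel_measurable (measure_pmf (bernoulli_pmf p1) \<Otimes>\<^sub>M \<mu>)"
    by (rule measurable_compose[OF measurable_snd m(1)])
  have [measurable]: "(\<lambda>y. snd (snd y)) \<in> borel_measurable (measure_pmf (bernoulli_pmf p1) \<Otimes>\<^sub>M \<mu>)"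
    by (rule measurable_compose[OF measurable_snd m(2)])
  show ?thesis unfolding stt_def by measurable
qed


definition qpmf :: "real \<Rightarrow> real \<Rightarrow> real \<Rightarrow> bool option pmf" where
  "qpmf a g1 g0 = bind_pmf (bernoulli_pmf a)
     (\<lambda>z. map_pmf (\<lambda>c. if c then Some z else None) (bernoulli_pmf (if z then g1 else g0)))"

lemma pmf_map_bern:
  assumes "0 \<le> r" "r \<le> 1"
  shows "pmf (map_pmf (\<lambda>c. if c then Some z else None) (bernoulli_pmf r)) v
       = (if v = Some z then r else if v = None then 1 - r else 0)"
proof -
  have "pmf (map_pmf (\<lambda>c. if c then Some z else None) (bernoulli_pmf r)) v
      = measure (measure_pmf (bernoulli_pmf r)) ((\<lambda>c. if c then Some z else None) -` {v})"
    by (rule pmf_map)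
  also have "(\<lambda>c. if c then Some z else None) -` {v} = (if v = Some z then {True} else if v = None then {False} else {})"
    by (auto split: if_splits)
  finally show ?thesis using assms by (auto simp: measure_pmf_single)
qed

lemma pmf_qpmf:
  assumes "0 \<le> a" "a \<le> 1" "0 \<le> g1" "g1 \<le> 1" "0 \<le> g0" "g0 \<le> 1"
  shows "pmf (qpmf a g1 g0) (Some True) = a * g1"
    "pmf (qpmf a g1 g0) (Some False) = (1 - a) * g0"
    "pmf (qpmf a g1 g0) None = 1 - a * g1 - (1 - a) * g0"
  unfolding qpmf_def pmf_bind using assms by (simp_all add: pmf_map_bern algebra_simps)


lemma measure_times_pmf:
  assumes "prob_space \<mu>" "B \<in> sets \<mu>"
  shows "measure (measure_pmf N \<Otimes>\<^sub>M \<mu>) (A \<times> B) = measure (measure_pmf N) A * measure \<mu> B"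
proof -
  interpret sigma_finite_measure \<mu> using assms(1) by (rule prob_space_imp_sigma_finite)
  have "emeasure (measure_pmf N \<Otimes>\<^sub>M \<mu>) (A \<times> B) = emeasure (measure_pmf N) A * emeasure \<mu> B"
    by (rule emeasure_pair_measure_Times) (use assms in auto)
  then show ?thesis unfolding measure_def by (simp add: enn2real_mult)
qed

lemma Gsurv_bounds:
  assumes "prob_space \<mu>"
  shows "0 \<le> Gsurv1 \<mu> c" "Gsurv1 \<mu> c \<le> 1" "0 \<le> Gsurv0 \<mu> c" "Gsurv0 \<mu> c \<le> 1"
  unfolding Gsurv1_def Gsurv0_def using prob_space.prob_le_1[OF assms] by auto

lemma unit_measure:
  assumes mu: "prob_space \<mu>" and sets_mu: "sets \<mu> = sets (borel :: (ennreal \<times> ennreal) measure)"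
    and p1: "0 \<le> p1" "p1 \<le> 1" and t: "0 \<le> t" and c: "0 \<le> c"
  shows "measure (measure_pmf (bernoulli_pmf p1) \<Otimes>\<^sub>M \<mu>)
           {y \<in> space (measure_pmf (bernoulli_pmf p1) \<Otimes>\<^sub>M \<mu>). stt t c y = v}
       = pmf (if t \<le> c then qpmf p1 (Gsurv1 \<mu> (ennreal t)) (Gsurv0 \<mu> (ennreal t)) else return_pmf None) v"
proof -
  define M0 where "M0 = measure_pmf (bernoulli_pmf p1) \<Otimes>\<^sub>M \<mu>"
  have P0: "prob_space M0" unfolding M0_def
    by (intro prob_space_pair mu measure_pmf.prob_space_axioms)
  have sp: "space M0 = UNIV \<times> space \<mu>" unfolding M0_def by (simp add: space_pair_measure)
  note m = meas_mu[OF sets_mu]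
  show ?thesis
  proof (cases "t \<le> c")
    case False
    have "stt t c y = None" for y
    proof -
      have "\<not> ennreal t \<le> ennreal c" using False c by (simp add: ennreal_le_iff)
      then show ?thesis unfolding stt_def by (auto simp: min_le_iff_disj)
    qed
    then have "{y \<in> space M0. stt t c y = v} = (if v = None then space M0 else {})" by auto
    then show ?thesis using False prob_space.prob_space[OF P0] unfolding M0_def[symmetric]
      by (auto simp: indicator_def)
  next
    case True
    have tc: "ennreal t \<le> ennreal c" using True c by (simp add: ennreal_le_iff)
    define G1 where "G1 = Gsurv1 \<mu> (ennreal t)"
    define G0 where "G0 = Gsurv0 \<mu> (ennreal t)"
    define B1 where "B1 = {x \<in> space \<mu>. ennreal t \<le> fst x}"
    define B0 where "B0 = {x \<in> space \<mu>. ennreal t \<le> snd x}"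
    have B1s: "B1 \<in> sets \<mu>" unfolding B1_def using m by measurable
    have B0s: "B0 \<in> sets \<mu>" unfolding B0_def using m by measurable
    have S1: "{y \<in> space M0. stt t c y = Some True} = {True} \<times> B1"
      unfolding sp B1_def stt_def using tc by (auto split: if_splits)
    have S0: "{y \<in> space M0. stt t c y = Some False} = {False} \<times> B0"
      unfolding sp B0_def stt_def using tc by (auto split: if_splits)
    have m1: "measure M0 ({True} \<times> B1) = p1 * G1"
      unfolding M0_def G1_def Gsurv1_def B1_def[symmetric]
      using measure_times_pmf[OF mu B1s, of "bernoulli_pmf p1" "{True}"] p1 by (simp add: measure_pmf_single)
    have m0: "measure M0 ({False} \<times> B0) = (1 - p1) * G0"
      unfolding M0_def G0_def Gsurv0_def B0_def[symmetric]
      using measure_times_pmf[OF mu B0s, of "bernoulli_pmf p1" "{False}"] p1 by (simp add: measure_pmf_single)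
    have s1: "{True} \<times> B1 \<in> sets M0" unfolding M0_def using B1s by (intro pair_measureI) auto
    have s0: "{False} \<times> B0 \<in> sets M0" unfolding M0_def using B0s by (intro pair_measureI) auto
    have SN: "{y \<in> space M0. stt t c y = None} = space M0 - ({True} \<times> B1 \<union> {False} \<times> B0)"
      using S1 S0 by (auto simp: stt_def split: if_splits)
    have mN: "measure M0 {y \<in> space M0. stt t c y = None} = 1 - (p1 * G1 + (1 - p1) * G0)"
    proof -
      interpret P: prob_space M0 by (rule P0)
      have "measure M0 ({True} \<times> B1 \<union> {False} \<times> B0) = p1 * G1 + (1 - p1) * G0"
        using s1 s0 m1 m0 by (subst P.finite_measure_Union) auto
      then show ?thesis unfolding SN using s1 s0 by (subst P.prob_compl) auto
    qed
    have Gb: "0 \<le> G1" "G1 \<le> 1" "0 \<le> G0" "G0 \<le> 1" unfolding G1_def G0_def using Gsurv_bounds[OF mu] by auto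
    note pq = pmf_qpmf[OF p1 Gb]
    show ?thesis
    proof (cases v)
      case None
      then show ?thesis using True mN pq unfolding M0_def[symmetric] G1_def[symmetric] G0_def[symmetric] by simp
    next
      case (Some z)
      then show ?thesis using True S1 S0 m1 m0 pq
        unfolding M0_def[symmetric] G1_def[symmetric] G0_def[symmetric] by (cases z) simp_all
    qed
  qed
qed


lemma integral_rep:
  fixes M :: "'a measure" and st :: "nat \<Rightarrow> 'a \<Rightarrow> bool option" and p :: "nat \<Rightarrow> bool option pmf"
    and G :: "(nat \<Rightarrow> bool option) \<Rightarrow> real"
  assumes PM: "prob_space M" and finI: "finite I"
    and meas: "\<And>i. i \<in> I \<Longrightarrow> st i \<in> measurable M (count_space UNIV)"
    and mv: "\<And>i v. i \<in> I \<Longrightarrow> measure M {y \<in> space M. st i y = v} = pmf (p i) v"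
  shows "integrable (PiM I (\<lambda>_. M)) (\<lambda>\<omega>. G (\<lambda>i. if i \<in> I then st i (\<omega> i) else None))"
    and "(\<integral>\<omega>. G (\<lambda>i. if i \<in> I then st i (\<omega> i) else None) \<partial>PiM I (\<lambda>_. M)) = Epi I p G"
proof -
  interpret PP: product_prob_space "\<lambda>_. M" by (rule product_prob_spaceI) (rule PM)
  have FM: "finite_measure M" using PM by (simp add: prob_space_def)
  define X where "X = PiE_dflt I None (\<lambda>_. UNIV :: bool option set)"
  have finX: "finite X" unfolding X_def using finI by (intro finite_PiE_dflt) auto
  define f where "f x i y = (if st i y = x i then 1 else 0 :: real)" for x :: "nat \<Rightarrow> bool option" and i y
  have fmeas: "f x i \<in> borel_measurable M" if "i \<in> I" for x i
  proof -
    have "(\<lambda>z. if z = x i then 1 else 0 :: real) \<in> borel_measurable (count_space UNIV)" by simp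
    from measurable_comp[OF meas[OF that] this] show ?thesis unfolding f_def comp_def .
  qed
  have fint: "integrable M (f x i)" if "i \<in> I" for x i
    by (rule finite_measure.integrable_const_bound[OF FM, where B=1]) (auto simp: f_def fmeas[OF that])
  have fval: "integral\<^sup>L M (f x i) = pmf (p i) (x i)" if "i \<in> I" for x i
  proof -
    have "integral\<^sup>L M (f x i) = integral\<^sup>L M (indicator {y \<in> space M. st i y = x i})"
      by (rule Bochner_Integration.integral_cong) (auto simp: f_def indicator_def)
    also have "\<dots> = measure M {y \<in> space M. st i y = x i}"
      by (simp add: Int_absorb2)
    finally show ?thesis using mv[OF that] by simp
  qed
  have rep: "G (\<lambda>i. if i \<in> I then st i (\<omega> i) else None) = (\<Sum>x\<in>X. G x * (\<Prod>i\<in>I. f x i (\<omega> i)))" for \<omega>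
  proof -
    define s where "s = (\<lambda>i. if i \<in> I then st i (\<omega> i) else None)"
    have sX: "s \<in> X" unfolding s_def X_def PiE_dflt_def by auto
    have pr: "(\<Prod>i\<in>I. f x i (\<omega> i)) = (if x = s then 1 else 0)" if "x \<in> X" for x
    proof (cases "x = s")
      case True then show ?thesis by (simp add: f_def s_def)
    next
      case False
      then obtain j where j: "x j \<noteq> s j" by auto
      have jI: "j \<in> I" using j that unfolding X_def PiE_dflt_def s_def by (cases "j \<in> I") auto
      have "f x j (\<omega> j) = 0" using j jI by (simp add: f_def s_def)
      then show ?thesis using False jI finI by (auto intro: prod_zero)
    qed
    have "(\<Sum>x\<in>X. G x * (\<Prod>i\<in>I. f x i (\<omega> i))) = (\<Sum>x\<in>X. if x = s then G x else 0)"
      by (rule sum.cong) (auto simp: pr)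
    also have "\<dots> = G s" using finX sX by (simp add: sum.delta')
    finally show ?thesis unfolding s_def by simp
  qed
  have tint: "integrable (PiM I (\<lambda>_. M)) (\<lambda>\<omega>. G x * (\<Prod>i\<in>I. f x i (\<omega> i)))" for x
    by (intro integrable_mult_right PP.product_integrable_prod finI fint)
  show "integrable (PiM I (\<lambda>_. M)) (\<lambda>\<omega>. G (\<lambda>i. if i \<in> I then st i (\<omega> i) else None))"
    unfolding rep by (intro Bochner_Integration.integrable_sum tint)
  have "(\<integral>\<omega>. G (\<lambda>i. if i \<in> I then st i (\<omega> i) else None) \<partial>PiM I (\<lambda>_. M))
      = (\<Sum>x\<in>X. G x * (\<Prod>i\<in>I. integral\<^sup>L M (f x i)))"
    unfolding rep
    by (subst Bochner_Integration.integral_sum[OF tint], subst integral_mult_right_zero,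
        subst PP.product_integral_prod[OF finI fint]) auto
  also have "\<dots> = (\<Sum>x\<in>X. G x * pmf (Pi_pmf I None p) x)"
  proof (rule sum.cong[OF refl])
    fix x assume x: "x \<in> X"
    have "pmf (Pi_pmf I None p) x = (\<Prod>i\<in>I. pmf (p i) (x i))"
      using x finI unfolding X_def PiE_dflt_def by (intro pmf_Pi') auto
    then show "G x * (\<Prod>i\<in>I. integral\<^sup>L M (f x i)) = G x * pmf (Pi_pmf I None p) x"
      by (simp add: fval)
  qed
  also have "\<dots> = Epi I p G"
    unfolding Epi_def
    by (rule integral_measure_pmf_real[symmetric])
       (use finX set_Pi_pmf_subset[OF finI, of None p] in \<open>auto simp: X_def PiE_dflt_def\<close>)
  finally show "(\<integral>\<omega>. G (\<lambda>i. if i \<in> I then st i (\<omega> i) else None) \<partial>PiM I (\<lambda>_. M)) = Epi I p G" .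
qed

lemma ev_iff:
  assumes "0 \<le> T" "0 \<le> t"
  shows "(ennreal T \<le> C \<and> min (ennreal T) C = ennreal t) \<longleftrightarrow> (T = t \<and> ennreal t \<le> min (ennreal T) C)"
proof
  assume h: "ennreal T \<le> C \<and> min (ennreal T) C = ennreal t"
  have "ennreal T = ennreal t" using h by (metis min_absorb1)
  then have "T = t" using assms by (simp add: ennreal_inj)
  then show "T = t \<and> ennreal t \<le> min (ennreal T) C" using h by simp
next
  assume h: "T = t \<and> ennreal t \<le> min (ennreal T) C"
  then show "ennreal T \<le> C \<and> min (ennreal T) C = ennreal t" by (auto simp: min_def split: if_splits)
qed

lemma stt_ne: "stt t c y \<noteq> None \<longleftrightarrow> ennreal t \<le> min (ennreal c) (if fst y then fst (snd y) else snd (snd y))"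
  unfolding stt_def by auto

lemma Vrep:
  assumes H0: "\<forall>i<n. T1 i = T0 i" and T0nn: "\<forall>i<n. 0 \<le> T0 i" and t: "0 \<le> t"
  shows "Vterm n T1 T0 \<omega> t = FF {..<n} {i\<in>{..<n}. T0 i = t}
            (\<lambda>i. if i \<in> {..<n} then stt t (T0 i) (\<omega> i) else None)"
proof -
  let ?C = "\<lambda>i. if fst (\<omega> i) then fst (snd (\<omega> i)) else snd (snd (\<omega> i))"
  have r1: "{i \<in> {..<n}. fst (\<omega> i) \<and> ennreal t \<le> obsW T1 T0 \<omega> i}
      = {i \<in> {..<n}. (if i \<in> {..<n} then stt t (T0 i) (\<omega> i) else None) = Some True}"
    using H0 by (auto simp: obsW_def realT_def realC_def stt_def)
  have r0: "{i \<in> {..<n}. \<not> fst (\<omega> i) \<and> ennreal t \<le> obsW T1 T0 \<omega> i}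
      = {i \<in> {..<n}. (if i \<in> {..<n} then stt t (T0 i) (\<omega> i) else None) = Some False}"
    using H0 by (auto simp: obsW_def realT_def realC_def stt_def)
  have rd: "{i \<in> {..<n}. obsDelta T1 T0 \<omega> i \<and> obsW T1 T0 \<omega> i = ennreal t}
      = {i \<in> {i\<in>{..<n}. T0 i = t}. (if i \<in> {..<n} then stt t (T0 i) (\<omega> i) else None) \<noteq> None}"
  proof -
    have eq: "obsDelta T1 T0 \<omega> i \<and> obsW T1 T0 \<omega> i = ennreal t \<longleftrightarrow> T0 i = t \<and> stt t (T0 i) (\<omega> i) \<noteq> None"
      if "i < n" for i
    proof -
      have T1i: "realT T1 T0 \<omega> i = T0 i" using H0 that by (simp add: realT_def)
      have "obsDelta T1 T0 \<omega> i \<and> obsW T1 T0 \<omega> i = ennreal t \<longleftrightarrow>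
            (ennreal (T0 i) \<le> ?C i \<and> min (ennreal (T0 i)) (?C i) = ennreal t)"
        unfolding obsDelta_def obsW_def T1i realC_def ..
      also have "\<dots> \<longleftrightarrow> T0 i = t \<and> ennreal t \<le> min (ennreal (T0 i)) (?C i)"
        by (rule ev_iff) (use T0nn that t in auto)
      also have "\<dots> \<longleftrightarrow> T0 i = t \<and> stt t (T0 i) (\<omega> i) \<noteq> None"
        by (simp only: stt_ne)
      finally show ?thesis .
    qed
    show ?thesis
    proof (rule set_eqI)
      fix i
      show "i \<in> {i \<in> {..<n}. obsDelta T1 T0 \<omega> i \<and> obsW T1 T0 \<omega> i = ennreal t} \<longleftrightarrow>
            i \<in> {i \<in> {i\<in>{..<n}. T0 i = t}. (if i \<in> {..<n} then stt t (T0 i) (\<omega> i) else None) \<noteq> None}"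
        using eq[of i] by auto
    qed
  qed
  show ?thesis
    unfolding Vterm_def FF_def atRisk1_def atRisk0_def events_def r1 r0 rd ..
qed

lemma FF_nonneg:
  assumes "E \<subseteq> I" "finite I"
  shows "0 \<le> FF I E x"
proof -
  define a where "a = card {i\<in>I. x i = Some True}"
  define b where "b = card {i\<in>I. x i = Some False}"
  define D where "D = card {i\<in>E. x i \<noteq> None}"
  have "{i\<in>I. x i \<noteq> None} = {i\<in>I. x i = Some True} \<union> {i\<in>I. x i = Some False}" by auto
  then have Nab: "card {i\<in>I. x i \<noteq> None} = a + b" unfolding a_def b_def
    using assms(2) by (subst card_Un_disjoint[symmetric]) auto
  have "D \<le> card {i\<in>I. x i \<noteq> None}" unfolding D_def using assms by (intro card_mono) auto
  then have DN: "real D \<le> real a + real b" using Nab by simp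
  show ?thesis
  proof (cases "a + b = 0")
    case True
    then show ?thesis unfolding FF_def Let_def a_def[symmetric] b_def[symmetric] by simp
  next
    case False
    then have "real a + real b - 1 \<ge> 0" by linarith
    then show ?thesis unfolding FF_def Let_def a_def[symmetric] b_def[symmetric] D_def[symmetric]
      using DN by (intro divide_nonneg_nonneg mult_nonneg_nonneg) auto
  qed
qed

theorem lemmaA7:
  fixes n :: nat and p1 :: real and \<mu> :: "(ennreal \<times> ennreal) measure"
    and T1 T0 :: "nat \<Rightarrow> real"
  assumes "0 < p1" and "p1 < 1"
    and "prob_space \<mu>" and "sets \<mu> = sets (borel :: (ennreal \<times> ennreal) measure)"
    and "\<forall>i<n. 0 \<le> T0 i" and "\<forall>i<n. 0 \<le> T1 i"
    and H0: "\<forall>i<n. T1 i = T0 i"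
  shows "(\<integral>\<omega>. logrank_U n T1 T0 \<omega> \<partial>(design n p1 \<mu>))
           \<ge> p1 * (1 - p1) * (real n * gtilde n \<mu> T0 / (real (tie_max n T0) + 1) - 1)"
proof -
  note mu = assms(3) and sets_mu = assms(4) and T0nn = assms(5)
  define I where "I = {..<n}"
  have finI: "finite I" unfolding I_def by simp
  define M0 where "M0 = measure_pmf (bernoulli_pmf p1) \<Otimes>\<^sub>M \<mu>"
  define d where "d = tie_max n T0"
  define c where "c = p1 * (1 - p1)"
  have c0: "0 \<le> c" unfolding c_def using assms(1,2) by simp
  have p1b: "0 \<le> p1" "p1 \<le> 1" using assms(1,2) by auto
  have des: "design n p1 \<mu> = PiM I (\<lambda>_. M0)" by (simp add: design_def I_def M0_def)
  have PM0: "prob_space M0" unfolding M0_def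
    by (intro prob_space_pair mu measure_pmf.prob_space_axioms)
  define E where "E t = {i\<in>I. T0 i = t}" for t
  define F where "F t = {i\<in>I. t < T0 i}" for t
  define q where "q t = qpmf p1 (Gsurv1 \<mu> (ennreal t)) (Gsurv0 \<mu> (ennreal t))" for t
  define pp where "pp t i = (if t \<le> T0 i then q t else return_pmf None)" for t i
  have tnn: "0 \<le> t" if "t \<in> T0 ` I" for t using that T0nn unfolding I_def by auto
  have Vr: "(\<lambda>\<omega>. Vterm n T1 T0 \<omega> t) = (\<lambda>\<omega>. FF I (E t) (\<lambda>i. if i \<in> I then stt t (T0 i) (\<omega> i) else None))"
    if "t \<in> T0 ` I" for t
    unfolding I_def E_def using Vrep[OF H0 T0nn tnn[OF that]] by (simp add: I_def)
  have rep: "integrable (PiM I (\<lambda>_. M0)) (\<lambda>\<omega>. FF I (E t) (\<lambda>i. if i \<in> I then stt t (T0 i) (\<omega> i) else None))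
     \<and> (\<integral>\<omega>. FF I (E t) (\<lambda>i. if i \<in> I then stt t (T0 i) (\<omega> i) else None) \<partial>PiM I (\<lambda>_. M0)) = Epi I (pp t) (FF I (E t))"
    if t: "t \<in> T0 ` I" for t
  proof -
    have meas: "stt t (T0 i) \<in> measurable M0 (count_space UNIV)" if "i \<in> I" for i
      unfolding M0_def by (rule stt_meas[OF sets_mu])
    have mv: "measure M0 {y \<in> space M0. stt t (T0 i) y = v} = pmf (pp t i) v" if "i \<in> I" for i v
      unfolding M0_def pp_def q_def
      by (rule unit_measure[OF mu sets_mu p1b tnn[OF t]]) (use that T0nn in \<open>auto simp: I_def\<close>)
    show ?thesis
      using integral_rep[where M=M0 and I=I and st="\<lambda>i. stt t (T0 i)" and p="pp t" and G="FF I (E t)",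
          OF PM0 finI meas mv] by blast
  qed
  have Vint: "integrable (design n p1 \<mu>) (\<lambda>\<omega>. Vterm n T1 T0 \<omega> t)" if "t \<in> T0 ` I" for t
    unfolding des Vr[OF that] using rep[OF that] by blast
  have Vval: "(\<integral>\<omega>. Vterm n T1 T0 \<omega> t \<partial>design n p1 \<mu>) = Epi I (pp t) (FF I (E t))" if "t \<in> T0 ` I" for t
    unfolding des Vr[OF that] using rep[OF that] by blast
  have cardE: "card (E t) \<le> d" if "t \<in> T0 ` I" for t
  proof -
    have "card (E t) \<in> (\<lambda>t. card {i \<in> {..<n}. T0 i = t}) ` (T0 ` {..<n})"
      using that unfolding E_def I_def by auto
    then show ?thesis unfolding d_def tie_max_def by (intro Max_ge) auto
  qed
  have Gt: "0 \<le> Gtilde \<mu> t" "Gtilde \<mu> t \<le> 1" for t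
    unfolding Gtilde_def using Gsurv_bounds[OF mu, of "ennreal t"] by (auto intro: mult_le_one)
  have bound: "real (card (E t)) * (c * Gtilde \<mu> t) / (real d + 1) - (if F t = {} then c else 0)
      \<le> Epi I (pp t) (FF I (E t))" if t: "t \<in> T0 ` I" for t
  proof (cases "F t = {}")
    case True
    have "Epi I (pp t) (\<lambda>_. 0) \<le> Epi I (pp t) (FF I (E t))"
      by (intro Epi_mono finI FF_nonneg) (auto simp: E_def)
    then have e0: "0 \<le> Epi I (pp t) (FF I (E t))" by (simp add: Epi_const)
    have ce: "real (card (E t)) \<le> real d + 1" using cardE[OF t] by simp
    have cg: "c * Gtilde \<mu> t \<le> c" using Gt[of t] c0 by (simp add: mult_left_le)
    have cg0: "0 \<le> c * Gtilde \<mu> t" using Gt[of t] c0 by simp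
    have X: "real (card (E t)) * (c * Gtilde \<mu> t) \<le> (real d + 1) * c"
      by (rule mult_mono[OF ce cg]) (use cg0 in auto)
    have X2: "real (card (E t)) * (c * Gtilde \<mu> t) \<le> c * (real d + 1)"
      using X by (simp only: mult.commute[of "real d + 1" c])
    have dpos: "0 < real d + 1" by simp
    have "real (card (E t)) * (c * Gtilde \<mu> t) / (real d + 1) \<le> c"
      using X2 by (simp only: pos_divide_le_eq[OF dpos])
    then show ?thesis using True e0 by simp
  next
    case False
    then obtain q0 where q0: "q0 \<in> F t" by blast
    have G1b: "0 \<le> Gsurv1 \<mu> (ennreal t)" "Gsurv1 \<mu> (ennreal t) \<le> 1"
      and G0b: "0 \<le> Gsurv0 \<mu> (ennreal t)" "Gsurv0 \<mu> (ennreal t) \<le> 1"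
      using Gsurv_bounds[OF mu] by auto
    note pq = pmf_qpmf[OF p1b G1b G0b]
    have co: "real (card (E t)) * pmf (q t) (Some True) * pmf (q t) (Some False) / (real d + 1)
          \<le> Epi I (pp t) (FF I (E t))"
    proof (rule core[OF finI _ _ _ q0])
      show "E t \<subseteq> I" "F t \<subseteq> I" "E t \<inter> F t = {}" unfolding E_def F_def by auto
      show "pp t i = q t" if "i \<in> E t \<union> F t" for i using that unfolding pp_def E_def F_def by auto
      show "pp t i = return_pmf None" if "i \<in> I" "i \<notin> E t \<union> F t" for i
        using that unfolding pp_def E_def F_def by auto
      show "card (E t) \<le> d" by (rule cardE[OF t])
    qed
    have eqp: "pmf (q t) (Some True) * pmf (q t) (Some False) = c * Gtilde \<mu> t"
      unfolding q_def pq c_def Gtilde_def by (simp add: algebra_simps)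
    have eqL: "real (card (E t)) * (c * Gtilde \<mu> t) / (real d + 1)
        = real (card (E t)) * pmf (q t) (Some True) * pmf (q t) (Some False) / (real d + 1)"
      by (simp only: eqp[symmetric] mult.assoc)
    have z: "(if F t = {} then c else 0) = 0" using False by simp
    show ?thesis using co by (simp only: eqL z diff_zero)
  qed
  have last: "card {t \<in> T0 ` I. F t = {}} \<le> 1"
  proof -
    have eqab: "a = b" if ha: "a \<in> {t \<in> T0 ` I. F t = {}}" and hb: "b \<in> {t \<in> T0 ` I. F t = {}}" for a b
    proof -
      obtain ia where ia: "ia \<in> I" "a = T0 ia" using ha by blast
      obtain ib where ib: "ib \<in> I" "b = T0 ib" using hb by blast
      have "\<not> a < T0 ib" using ha ib unfolding F_def by auto
      moreover have "\<not> b < T0 ia" using hb ia unfolding F_def by auto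
      ultimately show ?thesis using ia ib by auto
    qed
    have fin: "finite {t \<in> T0 ` I. F t = {}}" using finI by simp
    have "card {t \<in> T0 ` I. F t = {}} \<le> Suc 0"
      by (subst card_le_Suc0_iff_eq[OF fin]) (blast intro: eqab)
    then show ?thesis by simp
  qed
  have sumE: "(\<Sum>t\<in>T0 ` I. real (card (E t)) * Gtilde \<mu> t) = (\<Sum>i\<in>I. Gtilde \<mu> (T0 i))"
  proof -
    have "(\<Sum>i\<in>I. Gtilde \<mu> (T0 i)) = (\<Sum>t\<in>T0 ` I. \<Sum>i\<in>{x\<in>I. T0 x = t}. Gtilde \<mu> (T0 i))"
      by (rule sum.image_gen[OF finI])
    also have "\<dots> = (\<Sum>t\<in>T0 ` I. real (card (E t)) * Gtilde \<mu> t)"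
      unfolding E_def by (intro sum.cong refl) simp
    finally show ?thesis by simp
  qed
  have ng: "real n * gtilde n \<mu> T0 = (\<Sum>i\<in>I. Gtilde \<mu> (T0 i))"
    unfolding gtilde_def I_def by (cases "n = 0") simp_all
  have "(\<integral>\<omega>. logrank_U n T1 T0 \<omega> \<partial>(design n p1 \<mu>)) = (\<Sum>t\<in>T0 ` I. \<integral>\<omega>. Vterm n T1 T0 \<omega> t \<partial>design n p1 \<mu>)"
    unfolding logrank_U_def I_def[symmetric]
    by (rule Bochner_Integration.integral_sum) (rule Vint)
  also have "\<dots> = (\<Sum>t\<in>T0 ` I. Epi I (pp t) (FF I (E t)))" by (intro sum.cong refl Vval)
  also have "\<dots> \<ge> (\<Sum>t\<in>T0 ` I. real (card (E t)) * (c * Gtilde \<mu> t) / (real d + 1) - (if F t = {} then c else 0))"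
    by (intro sum_mono bound)
  finally have main: "(\<Sum>t\<in>T0 ` I. real (card (E t)) * (c * Gtilde \<mu> t) / (real d + 1) - (if F t = {} then c else 0))
     \<le> (\<integral>\<omega>. logrank_U n T1 T0 \<omega> \<partial>(design n p1 \<mu>))" .
  define S where "S = T0 ` I"
  have finS: "finite S" unfolding S_def using finI by simp
  have s2: "(\<Sum>t\<in>S. real (card (E t)) * (c * Gtilde \<mu> t) / (real d + 1))
      = c / (real d + 1) * (\<Sum>t\<in>S. real (card (E t)) * Gtilde \<mu> t)"
    by (simp add: sum_distrib_left mult.commute mult.left_commute)
  have s3: "(\<Sum>t\<in>S. if F t = {} then c else 0) = c * real (card {t \<in> S. F t = {}})"
    using finS by (simp add: sum.inter_filter[symmetric] mult.commute)
  have L: "(\<Sum>t\<in>S. real (card (E t)) * (c * Gtilde \<mu> t) / (real d + 1) - (if F t = {} then c else 0))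
      = c / (real d + 1) * (real n * gtilde n \<mu> T0) - c * real (card {t \<in> S. F t = {}})"
    unfolding sum_subtractf s2 s3 by (simp only: S_def sumE ng)
  have cl: "c * real (card {t \<in> S. F t = {}}) \<le> c"
    using last c0 unfolding S_def by (simp add: mult_left_le)
  have R: "p1 * (1 - p1) * (real n * gtilde n \<mu> T0 / (real (tie_max n T0) + 1) - 1)
      = c / (real d + 1) * (real n * gtilde n \<mu> T0) - c"
    unfolding c_def d_def by (simp add: algebra_simps)
  show ?thesis using main L cl R unfolding S_def by linarith
qed

end
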